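(* Let $G$ be a graph with a type-2A 1-planar drawing $D$, and let $G'$ be the graph obtained from $G$ by removing one edge from each pair of crossing edges of $D$. If $G$ is connected and $D$ is nice, then $G'$ is a connected, spanning, planar subgraph of $G$.
   Context: All drawings are good (no edge crosses itself, two edges cross at most once, adjacent edges do not cross). A drawing is 1-planar if every edge is crossed at most once. If edges $ab$ and $cd$ cross in a 1-planar drawing of $G$, the associated edges of this crossing are the edges of $G[\{a,b,c,d\}]$ other than $ab$ and $cd$. A 1-planar drawing is type-2A if every crossing has at least two associated edges, and every crossing with exactly two associated edges has these two edges disjoint. A 1-planar drawing is nice if for every pair of crossing edges, all of their associated edges are uncrossed. *)

theory Defs
  imports "HOL-Analysis.Analysis"
begin

definition simple_graph :: "'v set \<Rightarrow> 'v set set \<Rightarrow> bool" where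
  "simple_graph V E \<longleftrightarrow> finite V \<and>
     (\<forall>e\<in>E. \<exists>u v. u \<noteq> v \<and> u \<in> V \<and> v \<in> V \<and> e = {u, v})"

definition graph_connected :: "'v set \<Rightarrow> 'v set set \<Rightarrow> bool" where
  "graph_connected V E \<longleftrightarrow>
     (\<forall>u\<in>V. \<forall>v\<in>V. (u, v) \<in> {(x, y). {x, y} \<in> E}\<^sup>*)"

definition drawing :: "'v set \<Rightarrow> 'v set set \<Rightarrow> ('v \<Rightarrow> real^2) \<Rightarrow> ('v set \<Rightarrow> real \<Rightarrow> real^2) \<Rightarrow> bool" where
  "drawing V E p \<gamma> \<longleftrightarrow> inj_on p V \<and>
     (\<forall>e\<in>E. arc (\<gamma> e) \<and>
        (\<exists>u v. e = {u, v} \<and> pathstart (\<gamma> e) = p u \<and> pathfinish (\<gamma> e) = p v) \<and>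
        (\<forall>w\<in>V. p w \<notin> \<gamma> e ` {0<..<1}))"

definition edge_interior :: "('v set \<Rightarrow> real \<Rightarrow> real^2) \<Rightarrow> 'v set \<Rightarrow> (real^2) set" where
  "edge_interior \<gamma> e = \<gamma> e ` {0<..<1}"

definition crosses :: "('v set \<Rightarrow> real \<Rightarrow> real^2) \<Rightarrow> 'v set \<Rightarrow> 'v set \<Rightarrow> bool" where
  "crosses \<gamma> e f \<longleftrightarrow> e \<noteq> f \<and> edge_interior \<gamma> e \<inter> edge_interior \<gamma> f \<noteq> {}"

definition good_drawing :: "'v set \<Rightarrow> 'v set set \<Rightarrow> ('v \<Rightarrow> real^2) \<Rightarrow> ('v set \<Rightarrow> real \<Rightarrow> real^2) \<Rightarrow> bool" where
  "good_drawing V E p \<gamma> \<longleftrightarrow> drawing V E p \<gamma> \<and>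
     (\<forall>e\<in>E. \<forall>f\<in>E. e \<noteq> f \<longrightarrow>
        (e \<inter> f \<noteq> {} \<longrightarrow> edge_interior \<gamma> e \<inter> edge_interior \<gamma> f = {}) \<and>
        (\<forall>x y. x \<in> edge_interior \<gamma> e \<inter> edge_interior \<gamma> f \<longrightarrow>
               y \<in> edge_interior \<gamma> e \<inter> edge_interior \<gamma> f \<longrightarrow> x = y))"

definition one_planar :: "'v set set \<Rightarrow> ('v set \<Rightarrow> real \<Rightarrow> real^2) \<Rightarrow> bool" where
  "one_planar E \<gamma> \<longleftrightarrow>
     (\<forall>e\<in>E. \<forall>f\<in>E. \<forall>g\<in>E. crosses \<gamma> e f \<and> crosses \<gamma> e g \<longrightarrow> f = g)"

definition associated_edges :: "'v set set \<Rightarrow> 'v set \<Rightarrow> 'v set \<Rightarrow> 'v set set" where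
  "associated_edges E e f = {g \<in> E. g \<subseteq> e \<union> f} - {e, f}"

definition type_2A :: "'v set set \<Rightarrow> ('v set \<Rightarrow> real \<Rightarrow> real^2) \<Rightarrow> bool" where
  "type_2A E \<gamma> \<longleftrightarrow> one_planar E \<gamma> \<and>
     (\<forall>e\<in>E. \<forall>f\<in>E. crosses \<gamma> e f \<longrightarrow>
        card (associated_edges E e f) \<ge> 2 \<and>
        (card (associated_edges E e f) = 2 \<longrightarrow>
           (\<forall>g\<in>associated_edges E e f. \<forall>h\<in>associated_edges E e f. g \<noteq> h \<longrightarrow> g \<inter> h = {})))"

definition nice :: "'v set set \<Rightarrow> ('v set \<Rightarrow> real \<Rightarrow> real^2) \<Rightarrow> bool" where
  "nice E \<gamma> \<longleftrightarrow> one_planar E \<gamma> \<and>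
     (\<forall>e\<in>E. \<forall>f\<in>E. crosses \<gamma> e f \<longrightarrow>
        (\<forall>g\<in>associated_edges E e f. \<forall>h\<in>E. \<not> crosses \<gamma> g h))"

definition planar_graph :: "'v set \<Rightarrow> 'v set set \<Rightarrow> bool" where
  "planar_graph V E \<longleftrightarrow> (\<exists>(p :: 'v \<Rightarrow> real^2) \<gamma>. drawing V E p \<gamma> \<and>
     (\<forall>e\<in>E. \<forall>f\<in>E. \<not> crosses \<gamma> e f))"

end

theory Submission
  imports Defs
begin

lemma key:
  assumes "x\<noteq>y" "c\<noteq>d" "{x,y}\<inter>{c,d}={}" "{c,d}\<in>F" "A \<subseteq> F"
    "A \<subseteq> {{x,c},{x,d},{y,c},{y,d}}" "card A \<ge> 2"
    "card A = 2 \<longrightarrow> (\<forall>g\<in>A. \<forall>h\<in>A. g\<noteq>h \<longrightarrow> g\<inter>h={})"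
  shows "(x,y) \<in> {(u,v). {u,v}\<in>F}\<^sup>*"
proof -
  let ?S = "{(u,v). {u,v}\<in>F}"
  have fin: "finite A" using assms(6) by (rule finite_subset) simp
  have hx: "\<exists>g\<in>A. x\<in>g"
  proof (rule ccontr)
    assume "\<not> ?thesis"
    hence sub: "A \<subseteq> {{y,c},{y,d}}" using assms(6) by auto
    have "card A \<le> card {{y,c},{y,d}}" by (rule card_mono) (simp_all add: sub)
    also have "\<dots> \<le> 2" by (simp add: card_insert_le_m1)
    finally have c2: "card A = 2" using assms(7) by simp
    have ne: "{y,c} \<noteq> {y,d}" using assms(2) by (auto simp: doubleton_eq_iff)
    have "card {{y,c},{y,d}} = 2" using ne by simp
    hence "A = {{y,c},{y,d}}" using sub c2 by (metis card_subset_eq finite.emptyI finite.insertI)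
    thus False using assms(8) c2 ne by auto
  qed
  have hy: "\<exists>g\<in>A. y\<in>g"
  proof (rule ccontr)
    assume "\<not> ?thesis"
    hence sub: "A \<subseteq> {{x,c},{x,d}}" using assms(6) by auto
    have "card A \<le> card {{x,c},{x,d}}" by (rule card_mono) (simp_all add: sub)
    also have "\<dots> \<le> 2" by (simp add: card_insert_le_m1)
    finally have c2: "card A = 2" using assms(7) by simp
    have ne: "{x,c} \<noteq> {x,d}" using assms(2) by (auto simp: doubleton_eq_iff)
    have "card {{x,c},{x,d}} = 2" using ne by simp
    hence "A = {{x,c},{x,d}}" using sub c2 by (metis card_subset_eq finite.emptyI finite.insertI)
    thus False using assms(8) c2 ne by auto
  qed
  have cd: "(c,d) \<in> ?S" "(d,c) \<in> ?S" using assms(4) by (auto simp: insert_commute)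
  obtain g where g: "g\<in>A" "x\<in>g" using hx by blast
  obtain h where h: "h\<in>A" "y\<in>h" using hy by blast
  have gx: "(x,c) \<in> ?S \<or> (x,d) \<in> ?S" using g assms(3,5,6) by auto
  have hy': "(c,y) \<in> ?S \<or> (d,y) \<in> ?S" using h assms(3,5,6) by (auto simp: insert_commute)
  show ?thesis
    using gx hy' cd by (meson converse_rtrancl_into_rtrancl r_into_rtrancl rtrancl_trans)
qed

theorem lemma8:
  fixes V :: "'v set" and E :: "'v set set" and p :: "'v \<Rightarrow> real^2"
    and \<gamma> :: "'v set \<Rightarrow> real \<Rightarrow> real^2" and R :: "'v set set"
  assumes "simple_graph V E"
    and "good_drawing V E p \<gamma>"
    and "type_2A E \<gamma>"
    and "nice E \<gamma>"
    and "graph_connected V E"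
    and "R \<subseteq> E"
    and "\<forall>e\<in>R. \<exists>f\<in>E. crosses \<gamma> e f"
    and "\<forall>e\<in>E. \<forall>f\<in>E. crosses \<gamma> e f \<longrightarrow> (e \<in> R \<longleftrightarrow> f \<notin> R)"
  shows "simple_graph V (E - R) \<and> graph_connected V (E - R) \<and> planar_graph V (E - R)"
proof (intro conjI)
  show "simple_graph V (E - R)" using assms(1) by (auto simp: simple_graph_def)
  have dr: "drawing V E p \<gamma>" using assms(2) by (simp add: good_drawing_def)
  show "planar_graph V (E - R)"
    unfolding planar_graph_def
  proof (intro exI conjI)
    show "drawing V (E - R) p \<gamma>" using dr unfolding drawing_def by (meson DiffD1)
    show "\<forall>e\<in>E - R. \<forall>f\<in>E - R. \<not> crosses \<gamma> e f" using assms(8) by blast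
  qed
  let ?S = "{(u,v). {u,v}\<in>E - R}"
  have step: "(x,y) \<in> ?S\<^sup>*" if xy: "{x,y} \<in> E" for x y
  proof (cases "{x,y} \<in> R")
    case False thus ?thesis using xy by auto
  next
    case True
    then obtain f where f: "f\<in>E" "crosses \<gamma> {x,y} f" using assms(7) by blast
    have fR: "f \<notin> R" using assms(8) f True xy by blast
    obtain c d where cd: "c\<noteq>d" "f={c,d}" using assms(1) f(1) unfolding simple_graph_def by blast
    obtain u v where uv: "u\<noteq>v" "{x,y}={u,v}" using assms(1) xy unfolding simple_graph_def by blast
    have xney: "x\<noteq>y" using uv by (auto simp: doubleton_eq_iff)
    have cr: "{x,y} \<noteq> f" "edge_interior \<gamma> {x,y} \<inter> edge_interior \<gamma> f \<noteq> {}"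
      using f(2) unfolding crosses_def by auto
    note gd = assms(2)[unfolded good_drawing_def, THEN conjunct2, rule_format, OF xy f(1) cr(1), THEN conjunct1]
    have "{x,y} \<inter> f = {}" using gd cr(2) by blast
    hence disj: "{x,y}\<inter>{c,d}={}" using cd by simp
    let ?A = "associated_edges E {x,y} f"
    have c2: "card ?A \<ge> 2" "card ?A = 2 \<longrightarrow> (\<forall>g\<in>?A. \<forall>h\<in>?A. g\<noteq>h \<longrightarrow> g\<inter>h={})"
      using assms(3) f xy unfolding type_2A_def by (meson bspec)+
    have AF: "?A \<subseteq> E - R"
    proof
      fix g assume g: "g \<in> ?A"
      hence "g \<in> E" by (simp add: associated_edges_def)
      moreover have "g \<notin> R"
      proof
        assume "g \<in> R"
        then obtain h where "h\<in>E" "crosses \<gamma> g h" using assms(7) by blast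
        moreover have "\<forall>g\<in>?A. \<forall>h\<in>E. \<not> crosses \<gamma> g h"
          using assms(4) f xy unfolding nice_def by (meson bspec)
        ultimately show False using g by blast
      qed
      ultimately show "g \<in> E - R" by simp
    qed
    have A4: "?A \<subseteq> {{x,c},{x,d},{y,c},{y,d}}"
    proof
      fix g assume g: "g \<in> ?A"
      hence gE: "g \<in> E" and gs: "g \<subseteq> {x,y,c,d}" and gn: "g \<noteq> {x,y}" "g \<noteq> {c,d}"
        using cd by (auto simp: associated_edges_def)
      obtain u v where uv: "u\<noteq>v" "g={u,v}" using assms(1) gE unfolding simple_graph_def by blast
      show "g \<in> {{x,c},{x,d},{y,c},{y,d}}" using uv gs gn disj cd(1) xney
        by (auto simp: doubleton_eq_iff)
    qed
    show ?thesis
      by (rule key[OF xney cd(1) disj _ AF A4 c2]) (use fR f cd in auto)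
  qed
  show "graph_connected V (E - R)"
    unfolding graph_connected_def
  proof (intro ballI)
    fix u v assume "u\<in>V" "v\<in>V"
    hence "(u,v) \<in> {(x, y). {x, y} \<in> E}\<^sup>*" using assms(5) by (simp add: graph_connected_def)
    moreover have "{(x, y). {x, y} \<in> E} \<subseteq> ?S\<^sup>*"
    proof
      fix z assume "z \<in> {(x, y). {x, y} \<in> E}"
      then obtain x y where "z = (x,y)" "{x,y} \<in> E" by blast
      thus "z \<in> ?S\<^sup>*" using step by simp
    qed
    hence "{(x, y). {x, y} \<in> E}\<^sup>* \<subseteq> ?S\<^sup>*" by (rule rtrancl_subset_rtrancl)
    ultimately show "(u,v) \<in> ?S\<^sup>*" by (rule subsetD[rotated])
  qed
qed

end
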